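(* For every admissible Betti function $b:\operatorname{int}\mathbb{M}\to\mathbb{N}_0$, the direct sum $\bigoplus_{v\in\operatorname{int}\mathbb{M}}B_v^{b(v)}:\mathbb{M}^{\circ}\to\mathrm{Vect}_{\mathbb{F}}$ lies in $\mathcal{J}$; in particular it is pointwise finite-dimensional and coincides with the product $\prod_{v}B_v^{b(v)}$.
   Context: Fix a field $\mathbb{F}$. Equip $\mathbb{R}^2$ with the partial order $(x,y)\preceq(x',y')$ iff $x'\le x$ and $y\le y'$. Fix reals $a<b$, let $l_0=\{x+y=a\}$, $l_1=\{x+y=b\}$, $\mathbb{M}=\{(x,y): a\le x+y\le b\}$, $\partial\mathbb{M}=l_0\cup l_1$, $\operatorname{int}\mathbb{M}=\mathbb{M}\setminus\partial\mathbb{M}$, and $T:\mathbb{M}\to\mathbb{M}$, $T(x,y)=(a-y,b-x)$. For $u\in\mathbb{M}$, ${\uparrow}u=\{v:u\preceq v\}$, ${\downarrow}u=\{v:v\preceq u\}$; $\operatorname{int}$ of a subset is its interior in $\mathbb{M}$. Functors $\mathbb{M}^{\circ}\to\mathrm{Vect}_{\mathbb{F}}$ are contravariant in $\preceq$. For $v\in\operatorname{int}\mathbb{M}$, $B_v$ is the functor with $B_v(u)=\mathbb{F}$ if $u\in({\downarrow}v)\cap\operatorname{int}({\uparrow}T^{-1}(v))$ and $0$ otherwise, internal maps identity when domain and codomain are $\mathbb{F}$ and zero otherwise. A functor $G$ vanishing on $\partial\mathbb{M}$ is cohomological if for every axis-aligned rectangle in $\mathbb{M}$ with one corner on $l_1$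 and remaining corners $u\preceq v\preceq w$, applying $G$ to the chain $\cdots\preceq T^{-1}(v)\preceq T^{-1}(w)\preceq u\preceq v\preceq w\preceq T(u)\preceq T(v)\preceq\cdots$ gives an exact sequence. $G$ is sequentially continuous if $G(u)\to\varprojlim_kG(u_k)$ is an isomorphism for every $\preceq$-increasing sequence $u_k\to u$. $\mathcal{J}$ is the full subcategory of pointwise finite-dimensional, cohomological, sequentially continuous functors with support contained in some ${\downarrow}w$. A function $b:\operatorname{int}\mathbb{M}\to\mathbb{N}_0$ is an admissible Betti function if its support is contained in ${\downarrow}w$ for some $w\in\mathbb{M}$ and $\sum_{v\in({\uparrow}u)\cap\operatorname{int}({\downarrow}T(u))}b(v)<\infty$ for every $u\in\operatorname{int}\mathbb{M}$. *)

theory Defs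
  imports "HOL-Analysis.Analysis" "HOL-Library.Function_Algebras"
begin

type_synonym pt = "real \<times> real"

definition precM :: "pt \<Rightarrow> pt \<Rightarrow> bool" (infix "\<preceq>\<^sub>M" 50) where
  "p \<preceq>\<^sub>M q \<longleftrightarrow> fst q \<le> fst p \<and> snd p \<le> snd q"

definition Mstrip :: "real \<Rightarrow> real \<Rightarrow> pt set" where
  "Mstrip a b = {p. a \<le> fst p + snd p \<and> fst p + snd p \<le> b}"

definition lline :: "real \<Rightarrow> pt set" where
  "lline c = {p. fst p + snd p = c}"

definition bdryM :: "real \<Rightarrow> real \<Rightarrow> pt set" where
  "bdryM a b = lline a \<union> lline b"

definition intM :: "real \<Rightarrow> real \<Rightarrow> pt set" where
  "intM a b = Mstrip a b - bdryM a b"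

definition Tmap :: "real \<Rightarrow> real \<Rightarrow> pt \<Rightarrow> pt" where
  "Tmap a b p = (a - snd p, b - fst p)"

text \<open>Inverse of T: T(x,y) = (a-y, b-x), hence T^{-1}(x,y) = (b-y, a-x).\<close>
definition Tinv :: "real \<Rightarrow> real \<Rightarrow> pt \<Rightarrow> pt" where
  "Tinv a b p = (b - snd p, a - fst p)"

definition Tpow :: "real \<Rightarrow> real \<Rightarrow> int \<Rightarrow> pt \<Rightarrow> pt" where
  "Tpow a b k = (if 0 \<le> k then Tmap a b ^^ nat k else Tinv a b ^^ nat (- k))"

definition upM :: "real \<Rightarrow> real \<Rightarrow> pt \<Rightarrow> pt set" where
  "upM a b u = {v \<in> Mstrip a b. u \<preceq>\<^sub>M v}"

definition downM :: "real \<Rightarrow> real \<Rightarrow> pt \<Rightarrow> pt set" where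
  "downM a b u = {v \<in> Mstrip a b. v \<preceq>\<^sub>M u}"

definition intOf :: "real \<Rightarrow> real \<Rightarrow> pt set \<Rightarrow> pt set" where
  "intOf a b S = (top_of_set (Mstrip a b)) interior_of S"

text \<open>A functor G is represented by an ambient F-vector space 'v (scalar multiplication
  smul), a family of subspaces Sp u (u in M) and maps Mp u v : Sp v -> Sp u for u \<preceq> v
  (contravariance in \<preceq>).\<close>

definition is_functorM :: "real \<Rightarrow> real \<Rightarrow> ('f::field \<Rightarrow> 'v::ab_group_add \<Rightarrow> 'v)
    \<Rightarrow> (pt \<Rightarrow> 'v set) \<Rightarrow> (pt \<Rightarrow> pt \<Rightarrow> 'v \<Rightarrow> 'v) \<Rightarrow> bool" where
  "is_functorM a b smul Sp Mp \<longleftrightarrow>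
     vector_space smul \<and>
     (\<forall>u\<in>Mstrip a b. module.subspace smul (Sp u)) \<and>
     (\<forall>u\<in>Mstrip a b. \<forall>v\<in>Mstrip a b. u \<preceq>\<^sub>M v \<longrightarrow>
        (\<forall>x\<in>Sp v. Mp u v x \<in> Sp u) \<and>
        (\<forall>x\<in>Sp v. \<forall>y\<in>Sp v. Mp u v (x + y) = Mp u v x + Mp u v y) \<and>
        (\<forall>c. \<forall>x\<in>Sp v. Mp u v (smul c x) = smul c (Mp u v x))) \<and>
     (\<forall>u\<in>Mstrip a b. \<forall>x\<in>Sp u. Mp u u x = x) \<and>
     (\<forall>u\<in>Mstrip a b. \<forall>v\<in>Mstrip a b. \<forall>w\<in>Mstrip a b. u \<preceq>\<^sub>M v \<longrightarrow> v \<preceq>\<^sub>M w \<longrightarrow>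
        (\<forall>x\<in>Sp w. Mp u v (Mp v w x) = Mp u w x))"

definition pfd :: "real \<Rightarrow> real \<Rightarrow> ('f::field \<Rightarrow> 'v::ab_group_add \<Rightarrow> 'v) \<Rightarrow> (pt \<Rightarrow> 'v set) \<Rightarrow> bool" where
  "pfd a b smul Sp \<longleftrightarrow>
     (\<forall>u\<in>Mstrip a b. \<exists>B. finite B \<and> B \<subseteq> Sp u \<and> module.span smul B = Sp u)"

definition vanishes_on_bdry :: "real \<Rightarrow> real \<Rightarrow> (pt \<Rightarrow> 'v::ab_group_add set) \<Rightarrow> bool" where
  "vanishes_on_bdry a b Sp \<longleftrightarrow> (\<forall>u\<in>bdryM a b. Sp u = {0})"

text \<open>Exactness of the Z-indexed sequence ... -> G(p (n+1)) -> G(p n) -> G(p (n-1)) -> ...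
  obtained by applying the contravariant G to a chain ... \<preceq> p n \<preceq> p (n+1) \<preceq> ...\<close>
definition exact_along :: "(pt \<Rightarrow> 'v::ab_group_add set) \<Rightarrow> (pt \<Rightarrow> pt \<Rightarrow> 'v \<Rightarrow> 'v) \<Rightarrow> (int \<Rightarrow> pt) \<Rightarrow> bool" where
  "exact_along Sp Mp p \<longleftrightarrow>
     (\<forall>n. Mp (p n) (p (n + 1)) ` Sp (p (n + 1)) = {x \<in> Sp (p n). Mp (p (n - 1)) (p n) x = 0})"

text \<open>The chain ... \<preceq> T^{-1}v \<preceq> T^{-1}w \<preceq> u \<preceq> v \<preceq> w \<preceq> Tu \<preceq> Tv \<preceq> ..., indexed by Z with
  position 0 at u.\<close>
definition rect_chain :: "real \<Rightarrow> real \<Rightarrow> pt \<Rightarrow> pt \<Rightarrow> pt \<Rightarrow> int \<Rightarrow> pt" where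
  "rect_chain a b u v w n =
     Tpow a b (n div 3) (if n mod 3 = 0 then u else if n mod 3 = 1 then v else w)"

definition rect_corners :: "real \<Rightarrow> real \<Rightarrow> real \<Rightarrow> real \<Rightarrow> pt set" where
  "rect_corners x1 x2 y1 y2 = {(x1, y1), (x1, y2), (x2, y1), (x2, y2)}"

definition cohomological :: "real \<Rightarrow> real \<Rightarrow> (pt \<Rightarrow> 'v::ab_group_add set) \<Rightarrow> (pt \<Rightarrow> pt \<Rightarrow> 'v \<Rightarrow> 'v) \<Rightarrow> bool" where
  "cohomological a b Sp Mp \<longleftrightarrow>
     vanishes_on_bdry a b Sp \<and>
     (\<forall>x1 x2 y1 y2 c u v w. x1 < x2 \<and> y1 < y2 \<and>
        rect_corners x1 x2 y1 y2 \<subseteq> Mstrip a b \<and>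
        c \<in> lline b \<and> rect_corners x1 x2 y1 y2 = {c, u, v, w} \<and> c \<notin> {u, v, w} \<and>
        u \<preceq>\<^sub>M v \<and> v \<preceq>\<^sub>M w \<longrightarrow> exact_along Sp Mp (rect_chain a b u v w))"

definition seq_continuous :: "real \<Rightarrow> real \<Rightarrow> (pt \<Rightarrow> 'v set) \<Rightarrow> (pt \<Rightarrow> pt \<Rightarrow> 'v \<Rightarrow> 'v) \<Rightarrow> bool" where
  "seq_continuous a b Sp Mp \<longleftrightarrow>
     (\<forall>u s. u \<in> Mstrip a b \<and> (\<forall>k. s k \<in> Mstrip a b \<and> s k \<preceq>\<^sub>M s (Suc k)) \<and> s \<longlonglongrightarrow> u \<longrightarrow>
        bij_betw (\<lambda>x k. Mp (s k) u x) (Sp u)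
          {y. (\<forall>k. y k \<in> Sp (s k)) \<and> (\<forall>k. Mp (s k) (s (Suc k)) (y (Suc k)) = y k)})"

definition supp_in_down :: "real \<Rightarrow> real \<Rightarrow> (pt \<Rightarrow> 'v::ab_group_add set) \<Rightarrow> bool" where
  "supp_in_down a b Sp \<longleftrightarrow> (\<exists>w\<in>Mstrip a b. \<forall>u\<in>Mstrip a b. Sp u \<noteq> {0} \<longrightarrow> u \<preceq>\<^sub>M w)"

definition in_J :: "real \<Rightarrow> real \<Rightarrow> ('f::field \<Rightarrow> 'v::ab_group_add \<Rightarrow> 'v) \<Rightarrow> (pt \<Rightarrow> 'v set)
    \<Rightarrow> (pt \<Rightarrow> pt \<Rightarrow> 'v \<Rightarrow> 'v) \<Rightarrow> bool" where
  "in_J a b smul Sp Mp \<longleftrightarrow>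
     is_functorM a b smul Sp Mp \<and> pfd a b smul Sp \<and> cohomological a b Sp Mp \<and>
     seq_continuous a b Sp Mp \<and> supp_in_down a b Sp"

definition suppB :: "real \<Rightarrow> real \<Rightarrow> pt \<Rightarrow> pt set" where
  "suppB a b v = downM a b v \<inter> intOf a b (upM a b (Tinv a b v))"

definition admissible_betti :: "real \<Rightarrow> real \<Rightarrow> (pt \<Rightarrow> nat) \<Rightarrow> bool" where
  "admissible_betti a b \<beta> \<longleftrightarrow>
     (\<exists>w\<in>Mstrip a b. {v \<in> intM a b. \<beta> v \<noteq> 0} \<subseteq> downM a b w) \<and>
     (\<forall>u\<in>intM a b. finite {v \<in> intM a b \<inter> upM a b u \<inter> intOf a b (downM a b (Tmap a b u)). \<beta> v \<noteq> 0})"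

text \<open>Index set of the direct sum at u: pairs (v,i) with v in int M, i < \<beta> v, B_v(u) = F.\<close>
definition dsIdx :: "real \<Rightarrow> real \<Rightarrow> (pt \<Rightarrow> nat) \<Rightarrow> pt \<Rightarrow> (pt \<times> nat) set" where
  "dsIdx a b \<beta> u = {(v, i). v \<in> intM a b \<and> i < \<beta> v \<and> u \<in> suppB a b v}"

text \<open>Ambient space: functions (pt \<times> nat) \<Rightarrow> F with pointwise operations.\<close>
definition fscale :: "'f::field \<Rightarrow> ('i \<Rightarrow> 'f) \<Rightarrow> ('i \<Rightarrow> 'f)" where
  "fscale c f = (\<lambda>j. c * f j)"

text \<open>Direct sum: finitely supported families; product: all families.\<close>
definition dsSp :: "real \<Rightarrow> real \<Rightarrow> (pt \<Rightarrow> nat) \<Rightarrow> pt \<Rightarrow> (pt \<times> nat \<Rightarrow> 'f::field) set" where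
  "dsSp a b \<beta> u = {f. (\<forall>j. j \<notin> dsIdx a b \<beta> u \<longrightarrow> f j = 0) \<and> finite {j. f j \<noteq> 0}}"

definition prodSp :: "real \<Rightarrow> real \<Rightarrow> (pt \<Rightarrow> nat) \<Rightarrow> pt \<Rightarrow> (pt \<times> nat \<Rightarrow> 'f::field) set" where
  "prodSp a b \<beta> u = {f. \<forall>j. j \<notin> dsIdx a b \<beta> u \<longrightarrow> f j = 0}"

text \<open>Structure map u \<preceq> v: componentwise identity on summands B_v with B_v(u) = B_v(v) = F,
  zero otherwise; the same formula for direct sum and product.\<close>
definition dsMp :: "real \<Rightarrow> real \<Rightarrow> (pt \<Rightarrow> nat) \<Rightarrow> pt \<Rightarrow> pt \<Rightarrow> (pt \<times> nat \<Rightarrow> 'f::field) \<Rightarrow> (pt \<times> nat \<Rightarrow> 'f)" where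
  "dsMp a b \<beta> u v f = (\<lambda>j. if j \<in> dsIdx a b \<beta> u \<and> j \<in> dsIdx a b \<beta> v then f j else 0)"

end

theory Submission
  imports Defs
begin

lemma intOf_up_char:
  "intOf a b {w \<in> Mstrip a b. fst w \<le> c \<and> e \<le> snd w} = {w \<in> Mstrip a b. fst w < c \<and> e < snd w}"
proof
  show "{w \<in> Mstrip a b. fst w < c \<and> e < snd w} \<subseteq> intOf a b {w \<in> Mstrip a b. fst w \<le> c \<and> e \<le> snd w}"
  proof -
    have eq: "{w \<in> Mstrip a b. fst w < c \<and> e < snd w} = Mstrip a b \<inter> ({..<c} \<times> {e<..})" by auto
    have "openin (top_of_set (Mstrip a b)) (Mstrip a b \<inter> ({..<c} \<times> {e<..}))"
      by (intro openin_open_Int open_Times open_lessThan open_greaterThan)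
    then show ?thesis unfolding intOf_def eq by (rule interior_of_maximal[rotated]) auto
  qed
next
  show "intOf a b {w \<in> Mstrip a b. fst w \<le> c \<and> e \<le> snd w} \<subseteq> {w \<in> Mstrip a b. fst w < c \<and> e < snd w}"
  proof
    fix w assume "w \<in> intOf a b {w \<in> Mstrip a b. fst w \<le> c \<and> e \<le> snd w}"
    then obtain T where T: "openin (top_of_set (Mstrip a b)) T" "w \<in> T" "T \<subseteq> {w \<in> Mstrip a b. fst w \<le> c \<and> e \<le> snd w}"
      unfolding intOf_def interior_of_def by auto
    then obtain Op where Op: "open Op" "T = Mstrip a b \<inter> Op" by (auto simp: openin_open)
    with T have wO: "w \<in> Op" and wM: "w \<in> Mstrip a b" by auto
    obtain ee where ee: "ee > 0" "ball w ee \<subseteq> Op" using Op(1) wO open_contains_ball by blast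
    define t where "t = ee/2"
    obtain x y where w: "w = (x,y)" by (cases w)
    have "dist (x,y) (x+t, y-t) < ee"
    proof -
      have "dist (x,y) (x+t, y-t) = sqrt (t^2 + t^2)" by (simp add: dist_Pair_Pair dist_real_def)
      also have "\<dots> < sqrt (ee^2)" using ee(1) by (intro real_sqrt_less_mono) (simp add: t_def power2_eq_square field_simps)
      also have "\<dots> = ee" using ee(1) by simp
      finally show ?thesis .
    qed
    then have "(x+t, y-t) \<in> Op" using ee w by (auto simp: ball_def)
    moreover have "(x+t, y-t) \<in> Mstrip a b" using wM w by (simp add: Mstrip_def)
    ultimately have "x + t \<le> c \<and> e \<le> y - t" using T Op by auto
    then show "w \<in> {w \<in> Mstrip a b. fst w < c \<and> e < snd w}" using wM w ee t_def by auto
  qed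
qed

lemma intOf_down_sub:
  "{w \<in> Mstrip a b. c < fst w \<and> snd w < e} \<subseteq> intOf a b {w \<in> Mstrip a b. c \<le> fst w \<and> snd w \<le> e}"
proof -
  have eq: "{w \<in> Mstrip a b. c < fst w \<and> snd w < e} = Mstrip a b \<inter> ({c<..} \<times> {..<e})" by auto
  have "openin (top_of_set (Mstrip a b)) (Mstrip a b \<inter> ({c<..} \<times> {..<e}))"
    by (intro openin_open_Int open_Times open_lessThan open_greaterThan)
  then show ?thesis unfolding intOf_def eq by (rule interior_of_maximal[rotated]) auto
qed

definition R :: "real \<Rightarrow> real \<Rightarrow> pt \<Rightarrow> pt \<Rightarrow> bool" where
  "R a b v u \<longleftrightarrow> fst v \<le> fst u \<and> fst u < b - snd v \<and> a - fst v < snd u \<and> snd u \<le> snd v"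

lemma suppB_char: "u \<in> suppB a b v \<longleftrightarrow> R a b v u"
proof -
  have up: "upM a b (Tinv a b v) = {w \<in> Mstrip a b. fst w \<le> b - snd v \<and> a - fst v \<le> snd w}"
    by (auto simp: upM_def Tinv_def precM_def)
  show ?thesis
    unfolding suppB_def up intOf_up_char
    by (auto simp: downM_def precM_def R_def Mstrip_def)
qed

lemma dsIdx_char: "dsIdx a b \<beta> u = {(v, i). v \<in> intM a b \<and> i < \<beta> v \<and> R a b v u}"
  by (simp add: dsIdx_def suppB_char)


lemma R_intM: "R a b v u \<Longrightarrow> u \<in> intM a b"
  by (auto simp: R_def intM_def Mstrip_def bdryM_def lline_def)

lemma R_convex: "R a b v u \<Longrightarrow> R a b v w \<Longrightarrow> u \<preceq>\<^sub>M x \<Longrightarrow> x \<preceq>\<^sub>M w \<Longrightarrow> R a b v x"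
  by (auto simp: R_def precM_def)

lemma finite_dsIdx:
  assumes "admissible_betti a b \<beta>"
  shows "finite (dsIdx a b \<beta> u)"
proof (cases "u \<in> intM a b")
  case True
  let ?V = "{v \<in> intM a b \<inter> upM a b u \<inter> intOf a b (downM a b (Tmap a b u)). \<beta> v \<noteq> 0}"
  have fin: "finite ?V" using assms True unfolding admissible_betti_def by blast
  have dn: "downM a b (Tmap a b u) = {w \<in> Mstrip a b. a - snd u \<le> fst w \<and> snd w \<le> b - fst u}"
    by (auto simp: downM_def Tmap_def precM_def)
  have "dsIdx a b \<beta> u \<subseteq> Sigma ?V (\<lambda>v. {..<\<beta> v})"
  proof
    fix j assume "j \<in> dsIdx a b \<beta> u"
    then obtain v i where j: "j = (v,i)" "v \<in> intM a b" "i < \<beta> v" "R a b v u"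
      by (auto simp: dsIdx_char)
    have vM: "v \<in> Mstrip a b" using j(2) by (simp add: intM_def)
    have "v \<in> upM a b u" using j(4) vM by (auto simp: upM_def precM_def R_def)
    moreover have "v \<in> intOf a b (downM a b (Tmap a b u))"
      unfolding dn using vM j(4) by (intro subsetD[OF intOf_down_sub]) (auto simp: R_def)
    ultimately show "j \<in> Sigma ?V (\<lambda>v. {..<\<beta> v})" using j by auto
  qed
  moreover have "finite (Sigma ?V (\<lambda>v. {..<\<beta> v}))" using fin by (intro finite_SigmaI) auto
  ultimately show ?thesis by (rule finite_subset)
next
  case False
  then have "dsIdx a b \<beta> u = {}" using R_intM[of a b _ u] by (auto simp: dsIdx_char)
  then show ?thesis by simp
qed

lemma fin_supp: "finite I \<Longrightarrow> (\<And>j. j \<notin> I \<Longrightarrow> f j = 0) \<Longrightarrow> finite {j. f j \<noteq> 0}"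
  by (rule finite_subset[of _ I]) auto

lemma dsMp_in: "finite (dsIdx a b \<beta> u) \<Longrightarrow> dsMp a b \<beta> u v f \<in> dsSp a b \<beta> u"
  unfolding dsSp_def dsMp_def
  by (auto intro!: fin_supp[of "dsIdx a b \<beta> u"])

lemma dsSp_eq_prod: "finite (dsIdx a b \<beta> u) \<Longrightarrow> dsSp a b \<beta> u = prodSp a b \<beta> u"
  unfolding dsSp_def prodSp_def by (auto intro!: fin_supp[of "dsIdx a b \<beta> u"])

lemma vs_fscale: "vector_space (fscale :: 'f::field \<Rightarrow> ('i \<Rightarrow> 'f) \<Rightarrow> _)"
  by unfold_locales (auto simp: fscale_def fun_eq_iff algebra_simps)

lemma subspace_dsSp:
  "finite (dsIdx a b \<beta> u) \<Longrightarrow> module.subspace (fscale :: 'f::field \<Rightarrow> _) (dsSp a b \<beta> u :: (pt \<times> nat \<Rightarrow> 'f) set)"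
  unfolding module.subspace_def[OF vs_fscale[unfolded module_iff_vector_space[symmetric]]]
  unfolding dsSp_def fscale_def by (auto intro!: fin_supp[of "dsIdx a b \<beta> u"])


lemma sum_fun_apply: "(sum f A) k = sum (\<lambda>a. f a k) A"
  by (induction A rule: infinite_finite_induct) auto

lemma functor_ds:
  assumes fin: "\<And>u. finite (dsIdx a b \<beta> u)"
  shows "is_functorM a b (fscale :: 'f::field \<Rightarrow> _) (dsSp a b \<beta>) (dsMp a b \<beta>)"
  unfolding is_functorM_def
proof (intro conjI ballI allI impI)
  show "vector_space (fscale :: 'f::field \<Rightarrow> _)" by (rule vs_fscale)
next
  fix u show "module.subspace (fscale :: 'f::field \<Rightarrow> _) (dsSp a b \<beta> u :: (pt \<times> nat \<Rightarrow> 'f) set)"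
    by (rule subspace_dsSp[OF fin])
next
  fix u v and x :: "pt \<times> nat \<Rightarrow> 'f" show "dsMp a b \<beta> u v x \<in> dsSp a b \<beta> u" by (rule dsMp_in[OF fin])
next
  fix u v and x y :: "pt \<times> nat \<Rightarrow> 'f" show "dsMp a b \<beta> u v (x + y) = dsMp a b \<beta> u v x + dsMp a b \<beta> u v y"
    by (auto simp: dsMp_def fun_eq_iff)
next
  fix u v c and x :: "pt \<times> nat \<Rightarrow> 'f" show "dsMp a b \<beta> u v (fscale c x) = fscale c (dsMp a b \<beta> u v x)"
    by (auto simp: dsMp_def fscale_def fun_eq_iff)
next
  fix u and x :: "pt \<times> nat \<Rightarrow> 'f" assume "x \<in> dsSp a b \<beta> u"
  then show "dsMp a b \<beta> u u x = x" by (auto simp: dsMp_def dsSp_def fun_eq_iff)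
next
  fix u v w and x :: "pt \<times> nat \<Rightarrow> 'f" assume "u \<preceq>\<^sub>M v" "v \<preceq>\<^sub>M w" "x \<in> dsSp a b \<beta> w"
  then show "dsMp a b \<beta> u v (dsMp a b \<beta> v w x) = dsMp a b \<beta> u w x"
    by (auto simp: dsMp_def dsSp_def fun_eq_iff dsIdx_char intro: R_convex)
qed

lemma pfd_ds:
  assumes fin: "\<And>u. finite (dsIdx a b \<beta> u)"
  shows "pfd a b (fscale :: 'f::field \<Rightarrow> _) (dsSp a b \<beta>)"
  unfolding pfd_def
proof
  fix u
  interpret vs: vector_space "fscale :: 'f \<Rightarrow> (pt \<times> nat \<Rightarrow> 'f) \<Rightarrow> _" by (rule vs_fscale)
  define \<delta> :: "pt \<times> nat \<Rightarrow> pt \<times> nat \<Rightarrow> 'f" where "\<delta> j = (\<lambda>k. if k = j then 1 else 0)" for j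
  let ?B = "\<delta> ` dsIdx a b \<beta> u"
  have BS: "?B \<subseteq> dsSp a b \<beta> u"
    by (auto simp: dsSp_def \<delta>_def)
  have "dsSp a b \<beta> u \<subseteq> vs.span ?B"
  proof
    fix x :: "pt \<times> nat \<Rightarrow> 'f" assume x: "x \<in> dsSp a b \<beta> u"
    have "x = (\<Sum>j\<in>dsIdx a b \<beta> u. fscale (x j) (\<delta> j))"
      using x fin[of u] by (auto simp: fun_eq_iff sum_fun_apply fscale_def \<delta>_def dsSp_def if_distrib cong: if_cong)
    also have "\<dots> \<in> vs.span ?B"
      by (intro vs.span_sum vs.span_scale vs.span_base) auto
    finally show "x \<in> vs.span ?B" .
  qed
  moreover have "vs.subspace (dsSp a b \<beta> u)" by (rule subspace_dsSp[OF fin])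
  ultimately have "vs.span ?B = dsSp a b \<beta> u"
    using BS by (intro vs.span_subspace) auto
  then show "\<exists>B. finite B \<and> B \<subseteq> dsSp a b \<beta> u \<and> vs.span B = dsSp a b \<beta> u"
    using BS fin[of u] by (intro exI[of _ ?B]) auto
qed

lemma dsSp_zero: "dsIdx a b \<beta> u = {} \<Longrightarrow> dsSp a b \<beta> u = {0}"
  by (auto simp: dsSp_def fun_eq_iff)

lemma supp_ds:
  assumes "admissible_betti a b \<beta>"
  shows "supp_in_down a b (dsSp a b \<beta> :: pt \<Rightarrow> (pt \<times> nat \<Rightarrow> 'f::field) set)"
proof -
  obtain w where w: "w \<in> Mstrip a b" "{v \<in> intM a b. \<beta> v \<noteq> 0} \<subseteq> downM a b w"
    using assms unfolding admissible_betti_def by blast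
  show ?thesis unfolding supp_in_down_def
  proof (intro bexI[OF _ w(1)] ballI impI)
    fix u assume "(dsSp a b \<beta> u :: (pt \<times> nat \<Rightarrow> 'f) set) \<noteq> {0}"
    then have "dsIdx a b \<beta> u \<noteq> {}" using dsSp_zero by metis
    then obtain v i where "v \<in> intM a b" "i < \<beta> v" "R a b v u" by (auto simp: dsIdx_char)
    then have "v \<in> downM a b w" "R a b v u" using w by auto
    then show "u \<preceq>\<^sub>M w" by (auto simp: downM_def precM_def R_def)
  qed
qed

lemma vanish_ds: "vanishes_on_bdry a b (dsSp a b \<beta>)"
  unfolding vanishes_on_bdry_def
proof
  fix u assume "u \<in> bdryM a b"
  then have "u \<notin> intM a b" by (simp add: intM_def)
  then have "dsIdx a b \<beta> u = {}" using R_intM[of a b _ u] by (auto simp: dsIdx_char)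
  then show "dsSp a b \<beta> u = {0}" by (rule dsSp_zero)
qed


lemma memI: "j \<in> dsIdx a b \<beta> w \<longleftrightarrow> fst j \<in> intM a b \<and> snd j < \<beta> (fst j) \<and> R a b (fst j) w"
  by (cases j) (simp add: dsIdx_char)

lemma dsSp_out: "f \<in> dsSp a b \<beta> u \<Longrightarrow> j \<notin> dsIdx a b \<beta> u \<Longrightarrow> f j = 0"
  unfolding dsSp_def by blast

lemma precM_refl: "u \<preceq>\<^sub>M u" by (simp add: precM_def)
lemma precM_trans: "u \<preceq>\<^sub>M v \<Longrightarrow> v \<preceq>\<^sub>M w \<Longrightarrow> u \<preceq>\<^sub>M w" by (auto simp: precM_def)

lemma seq_ds:
  assumes fin: "\<And>u. finite (dsIdx a b \<beta> u)"
  shows "seq_continuous a b (dsSp a b \<beta> :: pt \<Rightarrow> (pt \<times> nat \<Rightarrow> 'f::field) set) (dsMp a b \<beta>)"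
  unfolding seq_continuous_def
proof (intro allI impI)
  fix u and s :: "nat \<Rightarrow> pt"
  assume A: "u \<in> Mstrip a b \<and> (\<forall>k. s k \<in> Mstrip a b \<and> s k \<preceq>\<^sub>M s (Suc k)) \<and> s \<longlonglongrightarrow> u"
  then have step: "\<And>k. s k \<preceq>\<^sub>M s (Suc k)" and lim: "s \<longlonglongrightarrow> u" by auto
  let ?I = "dsIdx a b \<beta>"
  have mono: "s k \<preceq>\<^sub>M s m" if "k \<le> m" for k m
    using that
  proof (induction m rule: dec_induct)
    case base then show ?case by (rule precM_refl)
  next
    case (step m) then show ?case using precM_trans \<open>\<And>k. s k \<preceq>\<^sub>M s (Suc k)\<close> by blast
  qed
  have lf: "(\<lambda>k. fst (s k)) \<longlonglongrightarrow> fst u" and ls: "(\<lambda>k. snd (s k)) \<longlonglongrightarrow> snd u"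
    using lim by (auto intro: tendsto_fst tendsto_snd)
  have dec: "decseq (\<lambda>k. fst (s k))" using step by (intro decseq_SucI) (auto simp: precM_def)
  have inc: "incseq (\<lambda>k. snd (s k))" using step by (intro incseq_SucI) (auto simp: precM_def)
  have fge: "fst u \<le> fst (s k)" for k using decseq_ge[OF dec lf] .
  have sle: "snd (s k) \<le> snd u" for k using incseq_le[OF inc ls] .
  have le_u: "s k \<preceq>\<^sub>M u" for k using fge sle by (simp add: precM_def)
  have ev_in: "\<exists>N. \<forall>k\<ge>N. R a b v (s k)" if "R a b v u" for v
  proof -
    have "eventually (\<lambda>k. fst (s k) < b - snd v) sequentially"
      using order_tendstoD(2)[OF lf] that by (auto simp: R_def)
    moreover have "eventually (\<lambda>k. a - fst v < snd (s k)) sequentially"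
      using order_tendstoD(1)[OF ls] that by (auto simp: R_def)
    ultimately have "eventually (\<lambda>k. R a b v (s k)) sequentially"
    proof eventually_elim
      case (elim k) then show ?case using that fge[of k] sle[of k] by (auto simp: R_def)
    qed
    then show ?thesis by (simp add: eventually_sequentially)
  qed
  have ev_out: "\<exists>N. \<forall>k\<ge>N. \<not> R a b v (s k)" if nR: "\<not> R a b v u" for v
  proof -
    consider "fst u < fst v" | "snd v < snd u" | "b - snd v \<le> fst u" | "snd u \<le> a - fst v"
      using nR unfolding R_def by argo
    then have "eventually (\<lambda>k. \<not> R a b v (s k)) sequentially"
    proof cases
      case 1
      then have "eventually (\<lambda>k. fst (s k) < fst v) sequentially" using order_tendstoD(2)[OF lf] by auto
      then show ?thesis by eventually_elim (auto simp: R_def)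
    next
      case 2
      then have "eventually (\<lambda>k. snd v < snd (s k)) sequentially" using order_tendstoD(1)[OF ls] by auto
      then show ?thesis by eventually_elim (auto simp: R_def)
    next
      case 3
      then have "\<forall>k. \<not> R a b v (s k)" using fge by (smt (verit) R_def)
      then show ?thesis by simp
    next
      case 4
      then have "\<forall>k. \<not> R a b v (s k)" using sle by (smt (verit) R_def)
      then show ?thesis by simp
    qed
    then show ?thesis by (simp add: eventually_sequentially)
  qed
  have evI_in: "\<exists>N. \<forall>k\<ge>N. j \<in> ?I (s k)" if "j \<in> ?I u" for j
    using ev_in[of "fst j"] that by (auto simp: memI)
  have evI_out: "\<exists>N. \<forall>k\<ge>N. j \<notin> ?I (s k)" if "j \<notin> ?I u" for j
  proof (cases "fst j \<in> intM a b \<and> snd j < \<beta> (fst j)")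
    case True then show ?thesis using ev_out[of "fst j"] that by (auto simp: memI)
  qed (auto simp: memI)
  have conv: "j \<in> ?I (s m)" if "j \<in> ?I (s k)" "j \<in> ?I u" "k \<le> m" for j k m
    using that R_convex[OF _ _ mono[OF \<open>k \<le> m\<close>] le_u] by (auto simp: memI)
  let ?Y = "{y. (\<forall>k. y k \<in> dsSp a b \<beta> (s k)) \<and> (\<forall>k. dsMp a b \<beta> (s k) (s (Suc k)) (y (Suc k)) = y k)}"
  show "bij_betw (\<lambda>x k. dsMp a b \<beta> (s k) u x) (dsSp a b \<beta> u) ?Y"
    unfolding bij_betw_def
  proof (intro conjI)
    show "inj_on (\<lambda>x k. dsMp a b \<beta> (s k) u x) (dsSp a b \<beta> u)"
    proof (rule inj_onI)
      fix x x'
      assume x: "x \<in> dsSp a b \<beta> u" "x' \<in> dsSp a b \<beta> u"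
        and eq: "(\<lambda>k. dsMp a b \<beta> (s k) u x) = (\<lambda>k. dsMp a b \<beta> (s k) u x')"
      show "x = x'"
      proof (rule ext)
        fix j show "x j = x' j"
        proof (cases "j \<in> ?I u")
          case True
          then obtain N where "\<forall>k\<ge>N. j \<in> ?I (s k)" using evI_in by blast
          then have "j \<in> ?I (s N)" by auto
          moreover have "dsMp a b \<beta> (s N) u x j = dsMp a b \<beta> (s N) u x' j" using eq by metis
          ultimately show ?thesis using True by (simp add: dsMp_def)
        next
          case False then show ?thesis using x dsSp_out by metis
        qed
      qed
    qed
  next
    show "(\<lambda>x k. dsMp a b \<beta> (s k) u x) ` dsSp a b \<beta> u = ?Y"
    proof
      show "(\<lambda>x k. dsMp a b \<beta> (s k) u x) ` dsSp a b \<beta> u \<subseteq> ?Y"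
      proof clarify
        fix x assume "x \<in> dsSp a b \<beta> u"
        show "(\<forall>k. dsMp a b \<beta> (s k) u x \<in> dsSp a b \<beta> (s k)) \<and>
          (\<forall>k. dsMp a b \<beta> (s k) (s (Suc k)) (dsMp a b \<beta> (s (Suc k)) u x) = dsMp a b \<beta> (s k) u x)"
        proof (intro conjI allI)
          fix k show "dsMp a b \<beta> (s k) u x \<in> dsSp a b \<beta> (s k)" by (rule dsMp_in[OF fin])
        next
          fix k show "dsMp a b \<beta> (s k) (s (Suc k)) (dsMp a b \<beta> (s (Suc k)) u x) = dsMp a b \<beta> (s k) u x"
            using conv[of _ k "Suc k"] by (auto simp: dsMp_def fun_eq_iff)
        qed
      qed
    next
      show "?Y \<subseteq> (\<lambda>x k. dsMp a b \<beta> (s k) u x) ` dsSp a b \<beta> u"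
      proof
        fix y assume "y \<in> ?Y"
        then have yS: "\<And>k. y k \<in> dsSp a b \<beta> (s k)"
          and yc: "\<And>k. dsMp a b \<beta> (s k) (s (Suc k)) (y (Suc k)) = y k" by auto
        have yc': "y k j = (if j \<in> ?I (s k) \<and> j \<in> ?I (s (Suc k)) then y (Suc k) j else 0)" for k j
          using fun_cong[OF yc[of k], of j] by (simp add: dsMp_def)
        have y0: "y k j = 0" if "j \<notin> ?I (s k)" for k j using yS[of k] that dsSp_out by metis
        have zero: "y k j = 0" if nj: "j \<notin> ?I u" for j k
        proof -
          obtain N where N: "\<forall>k\<ge>N. j \<notin> ?I (s k)" using evI_out[OF nj] by blast
          have "\<forall>k. N \<le> k + i \<longrightarrow> y k j = 0" for i
          proof (induction i)
            case 0 then show ?case using N y0 by auto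
          next
            case (Suc i)
            show ?case
            proof (intro allI impI)
              fix k assume "N \<le> k + Suc i"
              then have "y (Suc k) j = 0" using Suc by (metis add_Suc_shift)
              then show "y k j = 0" using yc'[of k j] by simp
            qed
          qed
          then show ?thesis by (metis le_add2)
        qed
        have const: "y k j = y (k + m) j" if "j \<in> ?I u" "j \<in> ?I (s k)" for j k m
        proof (induction m)
          case 0 then show ?case by simp
        next
          case (Suc m)
          have "j \<in> ?I (s (k + m))" "j \<in> ?I (s (Suc (k + m)))" using conv[OF that(2,1)] by auto
          then show ?case using Suc yc'[of "k + m" j] by simp
        qed
        define N where "N j = (SOME N. \<forall>k\<ge>N. j \<in> ?I (s k))" for j
        have NN: "\<forall>k\<ge>N j. j \<in> ?I (s k)" if "j \<in> ?I u" for j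
          unfolding N_def using someI_ex[OF evI_in[OF that]] .
        define x where "x j = (if j \<in> ?I u then y (N j) j else 0)" for j
        have xS: "x \<in> dsSp a b \<beta> u"
          unfolding dsSp_def using fin_supp[OF fin[of u], of x] by (auto simp: x_def)
        have "y = (\<lambda>k. dsMp a b \<beta> (s k) u x)"
        proof (intro ext)
          fix k j show "y k j = dsMp a b \<beta> (s k) u x j"
          proof (cases "j \<in> ?I u")
            case False then show ?thesis using zero by (simp add: dsMp_def)
          next
            case True
            show ?thesis
            proof (cases "j \<in> ?I (s k)")
              case False then show ?thesis using y0 by (simp add: dsMp_def)
            next
              case k: True
              have "j \<in> ?I (s (N j))" using NN[OF True] by auto
              then have "y (N j) j = y (N j + k) j" using const True by blast
              moreover have "y k j = y (k + N j) j" using const True k by blast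
              ultimately show ?thesis using True k by (simp add: dsMp_def x_def add.commute)
            qed
          qed
        qed
        then show "y \<in> (\<lambda>x k. dsMp a b \<beta> (s k) u x) ` dsSp a b \<beta> u" using xS by blast
      qed
    qed
  qed
qed


lemma Tpow_succ: "Tpow a b (m + 1) q = Tmap a b (Tpow a b m q)"
proof (cases "0 \<le> m")
  case True
  then have "nat (m + 1) = Suc (nat m)" by simp
  then show ?thesis using True by (simp add: Tpow_def)
next
  case False
  then have e: "nat (- m) = Suc (nat (- (m + 1)))" by simp
  have TT: "Tmap a b (Tinv a b p) = p" for p by (simp add: Tmap_def Tinv_def)
  show ?thesis
  proof (cases "m + 1 = 0")
    case True then show ?thesis using False e TT by (simp add: Tpow_def)
  next
    case F2: False
    then show ?thesis using False e TT by (simp add: Tpow_def)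
  qed
qed

lemma Tpow_pred: "Tpow a b (m - 1) q = Tinv a b (Tpow a b m q)"
proof -
  have "Tpow a b m q = Tmap a b (Tpow a b (m - 1) q)" using Tpow_succ[of a b "m - 1" q] by simp
  then show ?thesis by (simp add: Tmap_def Tinv_def)
qed

lemma Tpow_even: "Tpow a b (2 * k) q = (fst q - of_int k * (b - a), snd q + of_int k * (b - a))"
proof (induction k rule: int_induct[where k = 0])
  case base then show ?case by (simp add: Tpow_def)
next
  case (step1 i)
  have "Tpow a b (2 * (i + 1)) q = Tmap a b (Tpow a b (2 * i + 1) q)" using Tpow_succ[of a b "2*i+1"] by (simp add: algebra_simps)
  also have "\<dots> = Tmap a b (Tmap a b (Tpow a b (2 * i) q))" by (simp add: Tpow_succ)
  finally show ?case using step1 by (simp add: Tmap_def algebra_simps)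
next
  case (step2 i)
  have "Tpow a b (2 * (i - 1)) q = Tinv a b (Tpow a b (2 * i - 1) q)" using Tpow_pred[of a b "2*i-1"] by (simp add: algebra_simps)
  also have "\<dots> = Tinv a b (Tinv a b (Tpow a b (2 * i) q))" by (simp add: Tpow_pred)
  finally show ?case using step2 by (simp add: Tinv_def algebra_simps)
qed

lemma Tpow_odd: "Tpow a b (2 * k + 1) q = (a - snd q - of_int k * (b - a), b - fst q + of_int k * (b - a))"
  unfolding Tpow_succ Tpow_even by (simp add: Tmap_def algebra_simps)

lemma chain6:
  assumes "0 \<le> r" "r < 6"
  shows "rect_chain a b u v w (6 * k + r) =
    Tpow a b (2 * k + r div 3) (if r mod 3 = 0 then u else if r mod 3 = 1 then v else w)"
proof -
  have "(6 * k + r) div 3 = 2 * k + r div 3" by presburger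
  moreover have "(6 * k + r) mod 3 = r mod 3" by presburger
  ultimately show ?thesis by (simp add: rect_chain_def)
qed

lemma chain_vals:
  fixes a b :: real and k :: int
  defines "K \<equiv> of_int k * (b - a)"
  shows
  "rect_chain a b u v w (6 * k) = (fst u - K, snd u + K)"
  "rect_chain a b u v w (6 * k + 1) = (fst v - K, snd v + K)"
  "rect_chain a b u v w (6 * k + 2) = (fst w - K, snd w + K)"
  "rect_chain a b u v w (6 * k + 3) = (a - snd u - K, b - fst u + K)"
  "rect_chain a b u v w (6 * k + 4) = (a - snd v - K, b - fst v + K)"
  "rect_chain a b u v w (6 * k + 5) = (a - snd w - K, b - fst w + K)"
  using chain6[of 0 a b u v w k] chain6[of 1 a b u v w k] chain6[of 2 a b u v w k]
    chain6[of 3 a b u v w k] chain6[of 4 a b u v w k] chain6[of 5 a b u v w k]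
  by (simp_all add: K_def Tpow_even Tpow_odd)


lemma chain_local:
  fixes a b x1 x2 y1 y2 :: real and n :: int
  assumes "x1 < x2" "y1 < y2" "x2 + y2 = b" "a \<le> x1 + y1"
  defines "p \<equiv> rect_chain a b (x2, y1) (x1, y1) (x1, y2)"
  shows "R a b z (p n) \<longrightarrow> (R a b z (p (n + 1)) \<longleftrightarrow> \<not> R a b z (p (n - 1)))"
proof -
  define k where "k = n div 6"
  define K where "K = of_int k * (b - a)"
  have K1: "of_int (k - 1) * (b - a) = K - (b - a)" "of_int (k + 1) * (b - a) = K + (b - a)"
    by (simp_all add: K_def algebra_simps)
  note cv = chain_vals[where a=a and b=b and k=k and u="(x2, y1)" and v="(x1, y1)" and w="(x1, y2)", folded K_def, folded p_def]
  note cvm = chain_vals[where a=a and b=b and k="k - 1" and u="(x2, y1)" and v="(x1, y1)" and w="(x1, y2)", unfolded K1, folded p_def]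
  note cvp = chain_vals[where a=a and b=b and k="k + 1" and u="(x2, y1)" and v="(x1, y1)" and w="(x1, y2)", unfolded K1, folded p_def]
  consider "n = 6 * k" | "n = 6 * k + 1" | "n = 6 * k + 2" | "n = 6 * k + 3" | "n = 6 * k + 4" | "n = 6 * k + 5"
  proof -
    have "n = 6 * k + n mod 6" unfolding k_def by simp
    moreover have "n mod 6 = 0 \<or> n mod 6 = 1 \<or> n mod 6 = 2 \<or> n mod 6 = 3 \<or> n mod 6 = 4 \<or> n mod 6 = 5" by presburger
    ultimately show ?thesis using that by fastforce
  qed
  then show ?thesis
  proof cases
    case 1
    then have e: "n + 1 = 6 * k + 1" "n - 1 = 6 * (k - 1) + 5" by simp_all
    show ?thesis unfolding e unfolding 1 cv cvm using assms(1-4) by (simp add: R_def) linarith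
  next
    case 2
    then have e: "n + 1 = 6 * k + 2" "n - 1 = 6 * k" by simp_all
    show ?thesis unfolding e unfolding 2 cv using assms(1-4) by (simp add: R_def) linarith
  next
    case 3
    then have e: "n + 1 = 6 * k + 3" "n - 1 = 6 * k + 1" by simp_all
    show ?thesis unfolding e unfolding 3 cv using assms(1-4) by (simp add: R_def) linarith
  next
    case 4
    then have e: "n + 1 = 6 * k + 4" "n - 1 = 6 * k + 2" by simp_all
    show ?thesis unfolding e unfolding 4 cv using assms(1-4) by (simp add: R_def) linarith
  next
    case 5
    then have e: "n + 1 = 6 * k + 5" "n - 1 = 6 * k + 3" by simp_all
    show ?thesis unfolding e unfolding 5 cv using assms(1-4) by (simp add: R_def) linarith
  next
    case 6
    then have e: "n + 1 = 6 * (k + 1)" "n - 1 = 6 * k + 4" by simp_all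
    show ?thesis unfolding e unfolding 6 cv cvp using assms(1-4) by (simp add: R_def) linarith
  qed
qed


lemma exact_ds:
  assumes fin: "\<And>u. finite (dsIdx a b \<beta> u)"
    and loc: "\<And>n j. j \<in> dsIdx a b \<beta> (p n) \<Longrightarrow> (j \<in> dsIdx a b \<beta> (p (n + 1)) \<longleftrightarrow> j \<notin> dsIdx a b \<beta> (p (n - 1)))"
  shows "exact_along (dsSp a b \<beta> :: pt \<Rightarrow> (pt \<times> nat \<Rightarrow> 'f::field) set) (dsMp a b \<beta>) p"
  unfolding exact_along_def
proof (intro allI)
  fix n
  let ?I = "dsIdx a b \<beta>"
  show "dsMp a b \<beta> (p n) (p (n + 1)) ` dsSp a b \<beta> (p (n + 1)) =
    {x \<in> dsSp a b \<beta> (p n). dsMp a b \<beta> (p (n - 1)) (p n) x = (0 :: pt \<times> nat \<Rightarrow> 'f)}"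
  proof
    show "dsMp a b \<beta> (p n) (p (n + 1)) ` dsSp a b \<beta> (p (n + 1)) \<subseteq>
      {x \<in> dsSp a b \<beta> (p n). dsMp a b \<beta> (p (n - 1)) (p n) x = (0 :: pt \<times> nat \<Rightarrow> 'f)}"
    proof clarify
      fix f :: "pt \<times> nat \<Rightarrow> 'f"
      show "dsMp a b \<beta> (p n) (p (n + 1)) f \<in> dsSp a b \<beta> (p n) \<and>
        dsMp a b \<beta> (p (n - 1)) (p n) (dsMp a b \<beta> (p n) (p (n + 1)) f) = 0"
      proof
        show "dsMp a b \<beta> (p n) (p (n + 1)) f \<in> dsSp a b \<beta> (p n)" by (rule dsMp_in[OF fin])
        show "dsMp a b \<beta> (p (n - 1)) (p n) (dsMp a b \<beta> (p n) (p (n + 1)) f) = 0"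
          using loc[of _ n] by (auto simp: dsMp_def fun_eq_iff)
      qed
    qed
  next
    show "{x \<in> dsSp a b \<beta> (p n). dsMp a b \<beta> (p (n - 1)) (p n) x = (0 :: pt \<times> nat \<Rightarrow> 'f)} \<subseteq>
      dsMp a b \<beta> (p n) (p (n + 1)) ` dsSp a b \<beta> (p (n + 1))"
    proof clarify
      fix x :: "pt \<times> nat \<Rightarrow> 'f"
      assume x: "x \<in> dsSp a b \<beta> (p n)" and k: "dsMp a b \<beta> (p (n - 1)) (p n) x = 0"
      have k': "x j = 0" if "j \<in> ?I (p (n - 1))" "j \<in> ?I (p n)" for j
        using fun_cong[OF k, of j] that by (simp add: dsMp_def)
      have x0: "x j = 0" if "j \<notin> ?I (p (n + 1))" for j
      proof (cases "j \<in> ?I (p n)")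
        case True then show ?thesis using loc[of j n] that k' by blast
      next
        case False then show ?thesis using x dsSp_out by metis
      qed
      have xS: "x \<in> dsSp a b \<beta> (p (n + 1))"
        unfolding dsSp_def using x0 fin_supp[OF fin[of "p (n + 1)"], of x] by auto
      have "x = dsMp a b \<beta> (p n) (p (n + 1)) x"
        using x0 x dsSp_out by (fastforce simp: dsMp_def fun_eq_iff)
      then show "x \<in> dsMp a b \<beta> (p n) (p (n + 1)) ` dsSp a b \<beta> (p (n + 1))" using xS by blast
    qed
  qed
qed

lemma corners_ident:
  assumes "x1 < x2" "y1 < y2" "rect_corners x1 x2 y1 y2 \<subseteq> Mstrip a b"
    "c \<in> lline b" "rect_corners x1 x2 y1 y2 = {c, u, v, w}" "c \<notin> {u, v, w}"
    "u \<preceq>\<^sub>M v" "v \<preceq>\<^sub>M w"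
  shows "u = (x2, y1) \<and> v = (x1, y1) \<and> w = (x1, y2) \<and> x2 + y2 = b \<and> a \<le> x1 + y1"
proof -
  have M: "(x1,y1) \<in> Mstrip a b" "(x1,y2) \<in> Mstrip a b" "(x2,y1) \<in> Mstrip a b" "(x2,y2) \<in> Mstrip a b"
    using assms(3) by (auto simp: rect_corners_def)
  have cc: "c \<in> rect_corners x1 x2 y1 y2" using assms(5) by auto
  have c: "c = (x2, y2)"
    using cc M assms(1,2,4) by (auto simp: rect_corners_def Mstrip_def lline_def)
  have in1: "(x1,y1) \<in> {u,v,w}" "(x1,y2) \<in> {u,v,w}" "(x2,y1) \<in> {u,v,w}"
    using assms(1,2,5) c by (auto simp: rect_corners_def set_eq_iff)
  have in2: "u \<in> {(x1,y1), (x1,y2), (x2,y1)}" "v \<in> {(x1,y1), (x1,y2), (x2,y1)}" "w \<in> {(x1,y1), (x1,y2), (x2,y1)}"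
  proof -
    have "u \<in> rect_corners x1 x2 y1 y2" "v \<in> rect_corners x1 x2 y1 y2" "w \<in> rect_corners x1 x2 y1 y2"
      using assms(5) by auto
    then show "u \<in> {(x1,y1), (x1,y2), (x2,y1)}" "v \<in> {(x1,y1), (x1,y2), (x2,y1)}" "w \<in> {(x1,y1), (x1,y2), (x2,y1)}"
      using assms(6) c by (auto simp: rect_corners_def)
  qed
  have "u = (x2, y1) \<and> v = (x1, y1) \<and> w = (x1, y2)"
    using in1 in2 assms(1,2,7,8) by (auto simp: precM_def)
  moreover have "x2 + y2 = b" using assms(4) c by (simp add: lline_def)
  moreover have "a \<le> x1 + y1" using M(1) by (simp add: Mstrip_def)
  ultimately show ?thesis by simp
qed

lemma coh_ds:
  assumes fin: "\<And>u. finite (dsIdx a b \<beta> u)"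
  shows "cohomological a b (dsSp a b \<beta> :: pt \<Rightarrow> (pt \<times> nat \<Rightarrow> 'f::field) set) (dsMp a b \<beta>)"
  unfolding cohomological_def
proof (intro conjI vanish_ds allI impI)
  fix x1 x2 y1 y2 c u v w
  assume H: "x1 < x2 \<and> y1 < y2 \<and> rect_corners x1 x2 y1 y2 \<subseteq> Mstrip a b \<and>
        c \<in> lline b \<and> rect_corners x1 x2 y1 y2 = {c, u, v, w} \<and> c \<notin> {u, v, w} \<and>
        u \<preceq>\<^sub>M v \<and> v \<preceq>\<^sub>M w"
  then have I: "u = (x2, y1)" "v = (x1, y1)" "w = (x1, y2)" "x2 + y2 = b" "a \<le> x1 + y1"
    using corners_ident[of x1 x2 y1 y2 a b c u v w] by auto
  have lt: "x1 < x2" "y1 < y2" using H by auto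
  show "exact_along (dsSp a b \<beta> :: pt \<Rightarrow> (pt \<times> nat \<Rightarrow> 'f::field) set) (dsMp a b \<beta>) (rect_chain a b u v w)"
    unfolding I(1-3)
  proof (rule exact_ds[OF fin])
    fix n j
    assume "j \<in> dsIdx a b \<beta> (rect_chain a b (x2, y1) (x1, y1) (x1, y2) n)"
    then show "j \<in> dsIdx a b \<beta> (rect_chain a b (x2, y1) (x1, y1) (x1, y2) (n + 1)) \<longleftrightarrow>
               j \<notin> dsIdx a b \<beta> (rect_chain a b (x2, y1) (x1, y1) (x1, y2) (n - 1))"
      using chain_local[OF lt I(4,5), of "fst j" n] by (auto simp: memI)
  qed
qed


theorem lemma4p8:
  fixes a b :: real and \<beta> :: "pt \<Rightarrow> nat"
  assumes "a < b" and "admissible_betti a b \<beta>"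
  shows "in_J a b (fscale :: 'f::field \<Rightarrow> _) (dsSp a b \<beta>) (dsMp a b \<beta>)
         \<and> pfd a b (fscale :: 'f \<Rightarrow> _) (dsSp a b \<beta>)
         \<and> (\<forall>u\<in>Mstrip a b. (dsSp a b \<beta> u :: (pt \<times> nat \<Rightarrow> 'f) set) = prodSp a b \<beta> u)"
proof -
  have fin: "\<And>u. finite (dsIdx a b \<beta> u)" using finite_dsIdx[OF assms(2)] .
  show ?thesis
    unfolding in_J_def
    using functor_ds[OF fin] pfd_ds[OF fin] coh_ds[OF fin] seq_ds[OF fin] supp_ds[OF assms(2)]
      dsSp_eq_prod[OF fin]
    by blast
qed

end
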